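(* Let $p,q$ be positive integers and let $\Phi^*:V^*_{pq}(\mathbb{C})\to\mathbb{C}^{q\times p}$ be the map $\Phi^*\binom{Z_0}{Z_1}=Z_1Z_0^{-1}$, where $Z_0\in\mathbb{C}^{p\times p}$, $Z_1\in\mathbb{C}^{q\times p}$. Then the complex valued components of $\Phi^*$ constitute an orthogonal harmonic family of $\mathbf{GL}_p(\mathbb{C})$-invariant functions on $V^*_{pq}(\mathbb{C})$, equipped with the Euclidean metric.
   Context: $U^*_{pq}(\mathbb{C})=\{\binom{Z_0}{Z_1}\in\mathbb{C}^{(p+q)\times p}: Z_0^*Z_0+Z_1^*Z_1 \text{ invertible}\}$ and $V^*_{pq}(\mathbb{C})=\{\binom{Z_0}{Z_1}\in U^*_{pq}(\mathbb{C}): \det Z_0\neq0\}$. $\mathbf{GL}_p(\mathbb{C})$ acts by right multiplication. The Euclidean metric is $\langle X,Y\rangle=\mathfrak{Re}\,\mathrm{trace}(X^*Y)$. For a Riemannian manifold $(M,g)$ and complex functions $\phi,\psi$, $\tau(\phi)$ is the Laplace–Beltrami operator (extended complex-linearly) and $\kappa(\phi,\psi)=g(\mathrm{grad}\,\phi,\mathrm{grad}\,\psi)$ with $g$ extended complex-bilinearly. A set $\Omega$ of complex functions is an orthogonal harmonic family if $\tau(\phi)=0$ and $\kappa(\phi,\psi)=0$ for all $\phi,\psi\in\Omega$. *)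

theory Defs
  imports "HOL-Analysis.Analysis"
begin

text \<open>Complex matrices: a (p+q) x p matrix is an element of complex^'p^('p+'q)
  (rows indexed by 'p + 'q, columns by 'p).\<close>

definition cnj_transpose :: "complex^'n^'m \<Rightarrow> complex^'m^'n" where
  "cnj_transpose A = (\<chi> i j. cnj (A $ j $ i))"

definition upper_block :: "complex^'p::finite^('p + 'q::finite) \<Rightarrow> complex^'p^'p" where
  "upper_block Z = (\<chi> i j. Z $ Inl i $ j)"

definition lower_block :: "complex^'p::finite^('p + 'q::finite) \<Rightarrow> complex^'p^'q" where
  "lower_block Z = (\<chi> k j. Z $ Inr k $ j)"

definition Ustar :: "(complex^'p::finite^('p + 'q::finite)) set" where
  "Ustar = {Z. invertible (cnj_transpose (upper_block Z) ** upper_block Z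
                          + cnj_transpose (lower_block Z) ** lower_block Z)}"

definition Vstar :: "(complex^'p::finite^('p + 'q::finite)) set" where
  "Vstar = {Z \<in> Ustar. det (upper_block Z) \<noteq> 0}"

definition Phistar :: "complex^'p::finite^('p + 'q::finite) \<Rightarrow> complex^'p^'q" where
  "Phistar Z = lower_block Z ** matrix_inv (upper_block Z)"

text \<open>Calculus on the Euclidean space (the real inner product on complex^'p^('p+'q)
  is Re trace(X* Y)).  Directional derivative of a complex valued function along v.\<close>

definition dirderiv :: "('a::real_normed_vector \<Rightarrow> complex) \<Rightarrow> 'a \<Rightarrow> 'a \<Rightarrow> complex" where
  "dirderiv f v x = vector_derivative (\<lambda>t::real. f (x + t *\<^sub>R v)) (at 0)"

text \<open>Laplace-Beltrami operator of the flat Euclidean metric (complex-linear extension),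
  computed in the orthonormal basis Basis.\<close>
definition tension :: "('a::euclidean_space \<Rightarrow> complex) \<Rightarrow> 'a \<Rightarrow> complex" where
  "tension f x = (\<Sum>b\<in>Basis. dirderiv (\<lambda>y. dirderiv f b y) b x)"

text \<open>kappa(f,g) = g(grad f, grad g), metric extended complex-bilinearly.\<close>
definition conformality :: "('a::euclidean_space \<Rightarrow> complex) \<Rightarrow> ('a \<Rightarrow> complex) \<Rightarrow> 'a \<Rightarrow> complex" where
  "conformality f g x = (\<Sum>b\<in>Basis. dirderiv f b x * dirderiv g b x)"

definition orthogonal_harmonic_family ::
  "'a::euclidean_space set \<Rightarrow> ('a \<Rightarrow> complex) set \<Rightarrow> bool" where
  "orthogonal_harmonic_family M \<Omega> \<longleftrightarrow>
     (\<forall>\<phi>\<in>\<Omega>. \<forall>x\<in>M. tension \<phi> x = 0) \<and>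
     (\<forall>\<phi>\<in>\<Omega>. \<forall>\<psi>\<in>\<Omega>. \<forall>x\<in>M. conformality \<phi> \<psi> x = 0)"

definition GL_invariant :: "(complex^'p::finite^('p + 'q::finite)) set \<Rightarrow> (complex^'p^('p + 'q) \<Rightarrow> complex) \<Rightarrow> bool" where
  "GL_invariant M \<phi> \<longleftrightarrow>
     (\<forall>Z\<in>M. \<forall>g::complex^'p^'p. invertible g \<longrightarrow> Z ** g \<in> M \<and> \<phi> (Z ** g) = \<phi> Z)"

end

theory Submission
  imports Defs "HOL-Complex_Analysis.Cauchy_Integral_Formula"
begin


definition ln2 :: "'a::finite \<Rightarrow> 'b::finite \<Rightarrow> complex \<Rightarrow> complex^'b^'a" where
  "ln2 r c w = axis r (axis c w)"

lemma ln2_scale: "t *\<^sub>R ln2 r c u = ln2 r c (of_real t * u)"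
  unfolding ln2_def vec_eq_iff by (simp add: axis_def) (simp add: scaleR_conv_of_real)

lemma ln2_add: "ln2 r c (a + b) = ln2 r c a + ln2 r c b"
  by (simp add: ln2_def vec_eq_iff axis_def)

lemma ln2_0: "ln2 r c 0 = 0"
  by (simp add: ln2_def vec_eq_iff axis_def)

lemma dd1:
  fixes f :: "complex^'b::finite^'a::finite \<Rightarrow> complex"
  assumes h: "(\<lambda>w. f (x + ln2 r c w)) holomorphic_on ball 0 e"
    and s: "s \<in> ball 0 e"
  shows "dirderiv f (ln2 r c u) (x + ln2 r c s) = u * deriv (\<lambda>w. f (x + ln2 r c w)) s"
proof -
  let ?h = "\<lambda>w. f (x + ln2 r c w)"
  have D: "(?h has_field_derivative deriv ?h s) (at s)"
    using h s by (meson DERIV_deriv_iff_field_differentiable holomorphic_on_imp_differentiable_at open_ball)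
  have L: "((\<lambda>t::real. s + of_real t * u) has_vector_derivative u) (at 0)"
    by (auto intro!: derivative_eq_intros simp: has_vector_derivative_def scaleR_conv_of_real)
  have "((?h \<circ> (\<lambda>t::real. s + of_real t * u)) has_vector_derivative (u * deriv ?h s)) (at 0)"
    by (rule field_vector_diff_chain_at[OF L]) (use D in simp)
  moreover have "(?h \<circ> (\<lambda>t::real. s + of_real t * u)) = (\<lambda>t. f (x + ln2 r c s + t *\<^sub>R ln2 r c u))"
    by (simp add: o_def ln2_scale ln2_add add.assoc)
  ultimately show ?thesis unfolding dirderiv_def
    by (simp add: vector_derivative_at)
qed

lemma dd2:
  fixes f :: "complex^'b::finite^'a::finite \<Rightarrow> complex"
  assumes h: "(\<lambda>w. f (x + ln2 r c w)) holomorphic_on ball 0 e" and e: "e > 0"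
    and u: "norm u = 1"
  shows "dirderiv (\<lambda>y. dirderiv f (ln2 r c u) y) (ln2 r c u) x
     = u * u * deriv (deriv (\<lambda>w. f (x + ln2 r c w))) 0"
proof -
  let ?h = "\<lambda>w. f (x + ln2 r c w)"
  have hd: "deriv ?h holomorphic_on ball 0 e" using h by (simp add: holomorphic_deriv)
  have D: "(deriv ?h has_field_derivative deriv (deriv ?h) 0) (at 0)"
    using hd e by (meson DERIV_deriv_iff_field_differentiable holomorphic_on_imp_differentiable_at open_ball centre_in_ball)
  have L: "((\<lambda>t::real. of_real t * u) has_vector_derivative u) (at 0)"
    by (auto intro!: derivative_eq_intros simp: has_vector_derivative_def scaleR_conv_of_real)
  have "((deriv ?h \<circ> (\<lambda>t::real. of_real t * u)) has_vector_derivative (u * deriv (deriv ?h) 0)) (at 0)"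
    by (rule field_vector_diff_chain_at[OF L]) (use D in simp)
  then have "((\<lambda>t. u * (deriv ?h \<circ> (\<lambda>t::real. of_real t * u)) t) has_vector_derivative u * (u * deriv (deriv ?h) 0)) (at 0)"
    by (rule has_vector_derivative_mult_right)
  then have "((\<lambda>t. dirderiv f (ln2 r c u) (x + t *\<^sub>R ln2 r c u)) has_vector_derivative u * (u * deriv (deriv ?h) 0)) (at 0)"
  proof (rule has_vector_derivative_transform_within_open[where S="ball 0 e"])
    fix t :: real assume t: "t \<in> ball 0 e"
    have "of_real t * u \<in> ball 0 e" using t u by (simp add: norm_mult)
    then show "u * (deriv ?h \<circ> (\<lambda>t::real. of_real t * u)) t = dirderiv f (ln2 r c u) (x + t *\<^sub>R ln2 r c u)"
      using dd1[OF h] by (simp add: ln2_scale)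
  qed (use e in auto)
  then show ?thesis unfolding dirderiv_def[of "\<lambda>y. dirderiv f (ln2 r c u) y"]
    by (simp add: vector_derivative_at)
qed



lemma Basis_mat_eq: "(Basis :: (complex^'b::finite^'a::finite) set) = (\<lambda>(r,c,u). ln2 r c u) ` (UNIV \<times> UNIV \<times> {1, \<i>})"
  unfolding Basis_vec_def Basis_complex_def ln2_def
  apply (rule set_eqI)
  apply (simp add: image_iff)
  done

lemma inj_ln2: "inj_on (\<lambda>(r,c,u). ln2 r c u :: complex^'b::finite^'a::finite) (UNIV \<times> UNIV \<times> {1, \<i>})"
  unfolding inj_on_def ln2_def by (auto simp: axis_eq_axis)

lemma sum_Basis_mat:
  "(\<Sum>b\<in>(Basis :: (complex^'b::finite^'a::finite) set). F b) = (\<Sum>r\<in>UNIV. \<Sum>c\<in>UNIV. F (ln2 r c 1) + F (ln2 r c \<i>))"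
proof -
  have "(\<Sum>b\<in>(Basis :: (complex^'b::finite^'a::finite) set). F b) = (\<Sum>(r,c,u)\<in>UNIV \<times> UNIV \<times> {1, \<i>}. F (ln2 r c u))"
    unfolding Basis_mat_eq by (subst sum.reindex[OF inj_ln2]) (simp add: case_prod_beta o_def)
  also have "\<dots> = (\<Sum>r\<in>UNIV. \<Sum>(c,u)\<in>UNIV \<times> {1, \<i>}. F (ln2 r c u))"
    by (subst sum.cartesian_product[symmetric]) (simp add: case_prod_beta)
  also have "\<dots> = (\<Sum>r\<in>UNIV. \<Sum>c\<in>UNIV. \<Sum>u\<in>{1, \<i>}. F (ln2 r c u))"
    by (subst sum.cartesian_product[symmetric]) (simp add: case_prod_beta)
  also have "\<dots> = (\<Sum>r\<in>UNIV. \<Sum>c\<in>UNIV. F (ln2 r c 1) + F (ln2 r c \<i>))"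
    by simp
  finally show ?thesis .
qed

definition holo_lines :: "(complex^'b::finite^'a::finite \<Rightarrow> complex) \<Rightarrow> complex^'b^'a \<Rightarrow> bool" where
  "holo_lines f x \<longleftrightarrow> (\<forall>r c. \<exists>e>0. (\<lambda>w. f (x + ln2 r c w)) holomorphic_on ball 0 e)"

lemma dd1_0:
  fixes f :: "complex^'b::finite^'a::finite \<Rightarrow> complex"
  assumes h: "(\<lambda>w. f (x + ln2 r c w)) holomorphic_on ball 0 e" and e: "e > 0"
  shows "dirderiv f (ln2 r c u) x = u * deriv (\<lambda>w. f (x + ln2 r c w)) 0"
  using dd1[OF h, of 0 u] e by (simp add: ln2_0)

lemma tension_zero:
  assumes "holo_lines f x" shows "tension f x = 0"
proof -
  have "dirderiv (\<lambda>y. dirderiv f (ln2 r c 1) y) (ln2 r c 1) x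
      + dirderiv (\<lambda>y. dirderiv f (ln2 r c \<i>) y) (ln2 r c \<i>) x = 0" for r c
  proof -
    obtain e where e: "e > 0" "(\<lambda>w. f (x + ln2 r c w)) holomorphic_on ball 0 e"
      using assms unfolding holo_lines_def by blast
    show ?thesis using dd2[OF e(2) e(1), of 1] dd2[OF e(2) e(1), of \<i>] by simp
  qed
  then show ?thesis unfolding tension_def sum_Basis_mat by simp
qed

lemma conformality_zero:
  assumes "holo_lines f x" "holo_lines g x" shows "conformality f g x = 0"
proof -
  have "dirderiv f (ln2 r c 1) x * dirderiv g (ln2 r c 1) x
      + dirderiv f (ln2 r c \<i>) x * dirderiv g (ln2 r c \<i>) x = 0" for r c
  proof -
    obtain e where e: "e > 0" "(\<lambda>w. f (x + ln2 r c w)) holomorphic_on ball 0 e"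
      using assms unfolding holo_lines_def by blast
    obtain e' where e': "e' > 0" "(\<lambda>w. g (x + ln2 r c w)) holomorphic_on ball 0 e'"
      using assms unfolding holo_lines_def by blast
    show ?thesis using dd1_0[OF e(2) e(1), of 1] dd1_0[OF e(2) e(1), of \<i>]
       dd1_0[OF e'(2) e'(1), of 1] dd1_0[OF e'(2) e'(1), of \<i>] by (simp add: algebra_simps)
  qed
  then show ?thesis unfolding conformality_def sum_Basis_mat by simp
qed



lemma inv_props:
  fixes A :: "'a::field^'n::finite^'n"
  assumes "invertible A"
  shows "A ** matrix_inv A = mat 1 \<and> matrix_inv A ** A = mat 1"
  using assms unfolding invertible_def matrix_inv_def by (rule someI_ex)

lemma matrix_inv_eq:
  fixes A B :: "'a::field^'n::finite^'n"
  assumes "A ** B = mat 1"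
  shows "matrix_inv A = B"
proof -
  have inv: "invertible A" using assms invertible_right_inverse by blast
  have "matrix_inv A = matrix_inv A ** (A ** B)" by (simp add: assms)
  also have "\<dots> = (matrix_inv A ** A) ** B" by (simp add: matrix_mul_assoc)
  also have "\<dots> = B" using inv_props[OF inv] by simp
  finally show ?thesis .
qed

lemma ln2_nth: "ln2 a b w $ k $ l = (if k = a \<and> l = b then w else 0)"
  by (simp add: ln2_def axis_def)

lemma upper_Inl: "upper_block (x + ln2 (Inl i) c w) = upper_block x + ln2 i c w"
  by (simp add: upper_block_def vec_eq_iff ln2_nth)
lemma lower_Inl: "lower_block (x + ln2 (Inl i) c w) = lower_block x"
  by (simp add: lower_block_def vec_eq_iff ln2_nth)
lemma upper_Inr: "upper_block (x + ln2 (Inr i) c w) = upper_block x"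
  by (simp add: upper_block_def vec_eq_iff ln2_nth)
lemma lower_Inr: "lower_block (x + ln2 (Inr i) c w) = lower_block x + ln2 i c w"
  by (simp add: lower_block_def vec_eq_iff ln2_nth)

lemma Phistar_nth: "Phistar Z $ k $ j = (\<Sum>l\<in>UNIV. lower_block Z $ k $ l * matrix_inv (upper_block Z) $ l $ j)"
  by (simp add: Phistar_def matrix_matrix_mult_def)

lemma sherman:
  fixes A B :: "complex^'n::finite^'n"
  assumes AB: "A ** B = mat 1" and d: "1 + w * B$c$i \<noteq> 0"
  shows "(A + ln2 i c w) ** (\<chi> l j. B$l$j - w * B$l$i * B$c$j / (1 + w * B$c$i)) = mat 1"
proof -
  let ?d = "1 + w * B$c$i"
  have ab: "(\<Sum>l\<in>UNIV. A$a$l * B$l$j) = (if a = j then 1 else 0)" for a j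
    using AB by (simp add: vec_eq_iff matrix_matrix_mult_def mat_def)
  have "(\<Sum>l\<in>UNIV. (A$a$l + ln2 i c w $ a $ l) * (B$l$j - w * B$l$i * B$c$j / ?d))
      = (if a = j then 1 else 0)" for a j
  proof -
    have "(\<Sum>l\<in>UNIV. (A$a$l + ln2 i c w $ a $ l) * (B$l$j - w * B$l$i * B$c$j / ?d))
       = (\<Sum>l\<in>UNIV. A$a$l * B$l$j) - (w * B$c$j / ?d) * (\<Sum>l\<in>UNIV. A$a$l * B$l$i)
         + (\<Sum>l\<in>UNIV. ln2 i c w $ a $ l * (B$l$j - w * B$l$i * B$c$j / ?d))"
    proof -
      have "(A$a$l + ln2 i c w $ a $ l) * (B$l$j - w * B$l$i * B$c$j / ?d)
          = A$a$l * B$l$j - (w * B$c$j / ?d) * (A$a$l * B$l$i) + ln2 i c w $ a $ l * (B$l$j - w * B$l$i * B$c$j / ?d)" for l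
        by (simp add: ring_distribs mult.commute mult.left_commute add_divide_distrib diff_divide_distrib)
      then show ?thesis by (simp add: sum.distrib sum_subtractf sum_distrib_left)
    qed
    also have "(\<Sum>l\<in>UNIV. ln2 i c w $ a $ l * (B$l$j - w * B$l$i * B$c$j / ?d))
       = (if a = i then w * (B$c$j - w * B$c$i * B$c$j / ?d) else 0)"
      by (simp add: ln2_nth if_distrib[of "\<lambda>x. x * _"] cong: if_cong)
    moreover have key: "w * (B$c$j - w * B$c$i * B$c$j / ?d) = w * B$c$j / ?d"
      using d by (simp add: field_simps)
    ultimately show ?thesis unfolding ab
      by (cases "a = i") (simp_all add: key)
  qed
  then show ?thesis by (simp add: vec_eq_iff matrix_matrix_mult_def mat_def)
qed



lemma denom_nz:
  fixes b w :: complex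
  assumes "w \<in> ball 0 (1 / (norm b + 1))"
  shows "1 + w * b \<noteq> 0"
proof
  assume h: "1 + w * b = 0"
  have "norm w < 1 / (norm b + 1)" using assms by simp
  then have "norm w * (norm b + 1) < 1"
    by (simp add: field_simps add_pos_nonneg)
  then have "norm (w * b) < 1" by (simp add: norm_mult algebra_simps)
       (smt (verit) mult_nonneg_nonneg norm_ge_zero)
  moreover have "w * b = -1" using h by (simp add: eq_neg_iff_add_eq_0 add.commute)
  ultimately show False by simp
qed

lemma holo_Phistar:
  fixes x :: "complex^'p::finite^('p + 'q::finite)"
  assumes x: "x \<in> Vstar"
  shows "holo_lines (\<lambda>Z. Phistar Z $ k $ j) x"
  unfolding holo_lines_def
proof (intro allI)
  fix r c
  define A where "A = upper_block x"
  define B where "B = matrix_inv A"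
  have "det A \<noteq> 0" using x by (simp add: Vstar_def A_def)
  then have AB: "A ** B = mat 1" using inv_props invertible_det_nz B_def by blast
  show "\<exists>e>0. (\<lambda>w. Phistar (x + ln2 r c w) $ k $ j) holomorphic_on ball 0 e"
  proof (cases r)
    case (Inl i)
    define e where "e = 1 / (norm (B$c$i) + 1)"
    have e: "e > 0" unfolding e_def by (simp add: add_nonneg_pos)
    have eq: "Phistar (x + ln2 r c w) $ k $ j
        = (\<Sum>l\<in>UNIV. lower_block x $ k $ l * (B$l$j - w * B$l$i * B$c$j / (1 + w * B$c$i)))"
      if w: "w \<in> ball 0 e" for w
    proof -
      have d: "1 + w * B$c$i \<noteq> 0" using denom_nz w e_def by blast
      show ?thesis unfolding Phistar_nth Inl upper_Inl lower_Inl A_def[symmetric]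
        using matrix_inv_eq[OF sherman[OF AB d]] by simp
    qed
    have "(\<lambda>w. (\<Sum>l\<in>UNIV. lower_block x $ k $ l * (B$l$j - w * B$l$i * B$c$j / (1 + w * B$c$i))))
           holomorphic_on ball 0 e"
      using denom_nz e_def by (auto intro!: holomorphic_intros)
    then have "(\<lambda>w. Phistar (x + ln2 r c w) $ k $ j) holomorphic_on ball 0 e"
      by (rule holomorphic_transform) (simp add: eq)
    then show ?thesis using e by blast
  next
    case (Inr i)
    have eq: "Phistar (x + ln2 r c w) $ k $ j
        = (\<Sum>l\<in>UNIV. (lower_block x $ k $ l + (if k = i \<and> l = c then w else 0)) * B$l$j)" for w
      unfolding Phistar_nth Inr upper_Inr lower_Inr A_def[symmetric] B_def[symmetric]
      by (simp add: ln2_nth)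
    have "(\<lambda>w. (lower_block x $ k $ l + (if k = i \<and> l = c then w else 0)) * B$l$j) holomorphic_on ball 0 1" for l
      by (cases "k = i \<and> l = c") (auto intro!: holomorphic_intros)
    then have "(\<lambda>w. Phistar (x + ln2 r c w) $ k $ j) holomorphic_on ball 0 1"
      unfolding eq by (intro holomorphic_on_sum) auto
    then show ?thesis by (intro exI[of _ 1]) auto
  qed
qed



lemma matrix_add_rdistrib': "((B + C) ** A) = (B ** A) + (C ** A)"
  by (vector matrix_matrix_mult_def sum.distrib[symmetric] field_simps)

lemma upper_mult: "upper_block (Z ** g) = upper_block Z ** g"
  by (simp add: upper_block_def matrix_matrix_mult_def vec_eq_iff)
lemma lower_mult: "lower_block (Z ** g) = lower_block Z ** g"
  by (simp add: lower_block_def matrix_matrix_mult_def vec_eq_iff)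

lemma cnj_transpose_mult: "cnj_transpose (A ** B) = cnj_transpose B ** cnj_transpose A"
  by (simp add: cnj_transpose_def matrix_matrix_mult_def vec_eq_iff mult.commute)

lemma cnj_transpose_mat1: "cnj_transpose (mat 1 :: complex^'n^'n) = mat 1"
  by (simp add: cnj_transpose_def mat_def vec_eq_iff)

lemma invertible_cnj_transpose:
  fixes g :: "complex^'n::finite^'n"
  assumes "invertible g" shows "invertible (cnj_transpose g)"
proof -
  obtain g' where "g ** g' = mat 1" using assms invertible_def by blast
  then have "cnj_transpose g' ** cnj_transpose g = mat 1"
    by (metis cnj_transpose_mult cnj_transpose_mat1)
  then show ?thesis using invertible_left_inverse by blast
qed

lemma GL_inv:
  fixes Z :: "complex^'p::finite^('p + 'q::finite)" and g :: "complex^'p^'p"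
  assumes Z: "Z \<in> Vstar" and g: "invertible g"
  shows "Z ** g \<in> Vstar \<and> Phistar (Z ** g) = Phistar Z"
proof -
  let ?A = "upper_block Z" and ?L = "lower_block Z"
  have dA: "det ?A \<noteq> 0" and U: "Z \<in> Ustar" using Z by (auto simp: Vstar_def)
  have dg: "det g \<noteq> 0" using g invertible_det_nz by blast
  have d1: "det (upper_block (Z ** g)) \<noteq> 0" using dA dg by (simp add: upper_mult det_mul)
  have "cnj_transpose (upper_block (Z ** g)) ** upper_block (Z ** g)
        + cnj_transpose (lower_block (Z ** g)) ** lower_block (Z ** g)
      = cnj_transpose g ** ((cnj_transpose ?A ** ?A + cnj_transpose ?L ** ?L) ** g)"
    by (simp add: upper_mult lower_mult cnj_transpose_mult matrix_add_ldistrib matrix_add_rdistrib' matrix_mul_assoc)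
  moreover have "invertible (cnj_transpose g ** ((cnj_transpose ?A ** ?A + cnj_transpose ?L ** ?L) ** g))"
    using U g by (intro invertible_mult invertible_cnj_transpose) (auto simp: Ustar_def)
  ultimately have "Z ** g \<in> Ustar" by (simp add: Ustar_def)
  then have V: "Z ** g \<in> Vstar" using d1 by (simp add: Vstar_def)
  have iA: "invertible ?A" using dA invertible_det_nz by blast
  have "(?A ** g) ** (matrix_inv g ** matrix_inv ?A) = mat 1"
    using inv_props[OF iA] inv_props[OF g]
    by (metis matrix_mul_assoc matrix_mul_rid)
  then have "matrix_inv (?A ** g) = matrix_inv g ** matrix_inv ?A" by (rule matrix_inv_eq)
  then have "Phistar (Z ** g) = Phistar Z"
    using inv_props[OF g] unfolding Phistar_def upper_mult lower_mult
    by (metis matrix_mul_assoc matrix_mul_lid)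
  then show ?thesis using V by blast
qed

theorem proposition8p1:
  shows "orthogonal_harmonic_family (Vstar :: (complex^'p::finite^('p + 'q::finite)) set)
           {(\<lambda>Z. Phistar Z $ k $ j) | k j. True}
         \<and> (\<forall>k j. GL_invariant (Vstar :: (complex^'p^('p + 'q)) set) (\<lambda>Z. Phistar Z $ k $ j))"
  unfolding orthogonal_harmonic_family_def GL_invariant_def
  using tension_zero conformality_zero holo_Phistar GL_inv by fastforce

end
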